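(* Let $\theta>0$ be a real number. For integers $N\ge 1$ and $r\ge 0$, let \[ W_N(r)=\sum_{\pi \in \mathfrak{S}_N \text{ $r$-winnable}} \theta^{\pi^{-1}(N)-1}. \] Then for all $N\ge 2$ and $r\ge 0$, \[ W_{N}(r) = (N-1)\, W_{N-1}(r) + r\,(N-2)!\,\theta^{N-1}, \] with initial conditions $W_1(0)=1$ and $W_1(r)=0$ for all $r\ge 1$.
   Context: $\mathfrak{S}_N$ is the set of permutations $\pi=[\pi_1\pi_2\cdots\pi_N]$ of $\{1,\dots,N\}$ in one-line notation; $\pi^{-1}(N)$ is the position of the entry $N$. A left-to-right maximum of $\pi$ is an entry $\pi_j$ larger than every $\pi_i$ with $i<j$. For $r\ge 0$, the $r$-positional strategy rejects $\pi_1,\dots,\pi_r$ and then accepts the first subsequent left-to-right maximum (so for $r=0$ it accepts $\pi_1$). The permutation $\pi$ is called $r$-winnable if this strategy accepts the entry $N$. *)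

theory Defs
  imports Complex_Main "HOL-Combinatorics.Permutations"
begin

text \<open>A permutation of {1..N} in one-line notation is a function p with
  p permutes {1..N}; the entry at position i is p i, and the position of the
  entry N is inv p N.\<close>

definition ltr_max :: "(nat \<Rightarrow> nat) \<Rightarrow> nat \<Rightarrow> bool" where
  "ltr_max p j \<longleftrightarrow> (\<forall>i. 1 \<le> i \<and> i < j \<longrightarrow> p i < p j)"

definition winnable :: "nat \<Rightarrow> nat \<Rightarrow> (nat \<Rightarrow> nat) \<Rightarrow> bool" where
  "winnable N r p \<longleftrightarrow>
     (\<exists>j. r < j \<and> j \<le> N \<and> ltr_max p j
          \<and> (\<forall>k. r < k \<and> k < j \<longrightarrow> \<not> ltr_max p k)
          \<and> p j = N)"

definition W :: "real \<Rightarrow> nat \<Rightarrow> nat \<Rightarrow> real" where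
  "W \<theta> N r = (\<Sum>p \<in> {p. p permutes {1..N} \<and> winnable N r p}. \<theta> ^ (inv p N - 1))"

end

theory Submission
  imports Defs
begin

definition insf :: "nat \<Rightarrow> nat \<Rightarrow> (nat \<Rightarrow> nat) \<Rightarrow> nat \<Rightarrow> nat" where
  "insf M a q i = (if i = Suc M then a else if i \<in> {1..M} then (if a \<le> q i then Suc (q i) else q i) else i)"

lemma insf_permutes:
  assumes q: "q permutes {1..M}" and a: "a \<in> {1..M}"
  shows "insf M a q permutes {1..Suc M}"
proof -
  let ?p = "insf M a q"
  have qi: "\<And>i. i \<in> {1..M} \<Longrightarrow> q i \<in> {1..M}" using permutes_in_image[OF q] by blast
  have out: "\<And>x. x \<notin> {1..Suc M} \<Longrightarrow> ?p x = x" by (auto simp: insf_def)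
  have img: "?p ` {1..Suc M} \<subseteq> {1..Suc M}"
  proof
    fix y assume "y \<in> ?p ` {1..Suc M}"
    then obtain x where x: "x \<in> {1..Suc M}" "y = ?p x" by blast
    show "y \<in> {1..Suc M}"
    proof (cases "x = Suc M")
      case True then show ?thesis using x a by (simp add: insf_def)
    next
      case False
      then have "x \<in> {1..M}" using x by auto
      then show ?thesis using x qi[of x] False by (auto simp: insf_def)
    qed
  qed
  have inj: "inj_on ?p {1..Suc M}"
  proof (rule inj_onI)
    fix x y assume x: "x \<in> {1..Suc M}" and y: "y \<in> {1..Suc M}" and e: "?p x = ?p y"
    have iq: "\<And>u v. q u = q v \<Longrightarrow> u = v" using permutes_inj[OF q] by (simp add: inj_eq)
    show "x = y"
    proof (cases "x = Suc M"; cases "y = Suc M")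
      assume "x \<noteq> Suc M" "y \<noteq> Suc M"
      then have "x \<in> {1..M}" "y \<in> {1..M}" using x y by auto
      then show ?thesis using e iq[of x y] \<open>x \<noteq> Suc M\<close> \<open>y \<noteq> Suc M\<close>
        by (auto simp: insf_def split: if_splits)
    qed (use x y e in \<open>auto simp: insf_def split: if_splits\<close>)
  qed
  have "bij_betw ?p {1..Suc M} {1..Suc M}"
    using endo_inj_surj[OF _ img inj] inj by (simp add: bij_betw_def)
  then show ?thesis using out bij_imp_permutes by blast
qed


lemma insf_in: "i \<in> {1..M} \<Longrightarrow> insf M a q i = (if a \<le> q i then Suc (q i) else q i)"
  by (simp add: insf_def)

lemma insf_ltr:
  assumes "1 \<le> j" "j \<le> M"
  shows "ltr_max (insf M a q) j \<longleftrightarrow> ltr_max q j"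
proof -
  have "insf M a q i < insf M a q j \<longleftrightarrow> q i < q j" if "1 \<le> i" "i < j" for i
    using that assms insf_in[of i M a q] insf_in[of j M a q] by auto
  then show ?thesis unfolding ltr_max_def by auto
qed

lemma insf_val:
  assumes q: "q permutes {1..M}" and a: "a \<in> {1..M}" and j: "j \<in> {1..Suc M}"
  shows "insf M a q j = Suc M \<longleftrightarrow> j \<in> {1..M} \<and> q j = M"
proof -
  have qi: "\<And>i. i \<in> {1..M} \<Longrightarrow> q i \<in> {1..M}" using permutes_in_image[OF q] by blast
  show ?thesis
  proof (cases "j = Suc M")
    case True then show ?thesis using a by (simp add: insf_def)
  next
    case False
    then have "j \<in> {1..M}" using j by auto
    then show ?thesis using qi[of j] a False by (auto simp: insf_def)
  qed
qed

lemma insf_winnable: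
  assumes q: "q permutes {1..M}" and a: "a \<in> {1..M}"
  shows "winnable (Suc M) r (insf M a q) \<longleftrightarrow> winnable M r q"
proof
  assume "winnable (Suc M) r (insf M a q)"
  then obtain j where j: "r < j" "j \<le> Suc M" "ltr_max (insf M a q) j"
    "\<forall>k. r < k \<and> k < j \<longrightarrow> \<not> ltr_max (insf M a q) k" "insf M a q j = Suc M"
    unfolding winnable_def by blast
  have jm: "j \<in> {1..M}" "q j = M" using insf_val[OF q a, of j] j by auto
  show "winnable M r q" unfolding winnable_def
  proof (intro exI conjI allI impI)
    show "r < j" "j \<le> M" "q j = M" using j jm by auto
    show "ltr_max q j" using j jm insf_ltr[of j M a q] by auto
    fix k assume "r < k \<and> k < j"
    then show "\<not> ltr_max q k" using j jm insf_ltr[of k M a q] by auto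
  qed
next
  assume "winnable M r q"
  then obtain j where j: "r < j" "j \<le> M" "ltr_max q j"
    "\<forall>k. r < k \<and> k < j \<longrightarrow> \<not> ltr_max q k" "q j = M"
    unfolding winnable_def by blast
  show "winnable (Suc M) r (insf M a q)" unfolding winnable_def
  proof (intro exI conjI allI impI)
    show "r < j" "j \<le> Suc M" using j by auto
    show "insf M a q j = Suc M" using insf_val[OF q a, of j] j by auto
    show "ltr_max (insf M a q) j" using j insf_ltr[of j M a q] by auto
    fix k assume "r < k \<and> k < j"
    then show "\<not> ltr_max (insf M a q) k" using j insf_ltr[of k M a q] by auto
  qed
qed

lemma insf_inv:
  assumes q: "q permutes {1..M}" and a: "a \<in> {1..M}" and M: "1 \<le> M"
  shows "inv (insf M a q) (Suc M) = inv q M"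
proof -
  have m: "q (inv q M) = M" using permutes_inverses[OF q] by simp
  have "inv q M \<in> {1..M}" using permutes_in_image[OF q, of "inv q M"] m M by auto
  then have "insf M a q (inv q M) = Suc M" using insf_val[OF q a, of "inv q M"] m by auto
  then show ?thesis using permutes_inv_eq[OF insf_permutes[OF q a]] by blast
qed

lemma insf_inj:
  assumes q: "q permutes {1..M}" and q': "q' permutes {1..M}"
    and e: "insf M a q = insf M a' q'"
  shows "a = a' \<and> q = q'"
proof -
  have aa: "a = a'" using fun_cong[OF e, of "Suc M"] by (simp add: insf_def)
  have "q i = q' i" for i
  proof (cases "i \<in> {1..M}")
    case True
    then show ?thesis using fun_cong[OF e, of i] aa by (auto simp: insf_def split: if_splits)
  next
    case False
    then show ?thesis using permutes_not_in[OF q] permutes_not_in[OF q'] by metis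
  qed
  then show ?thesis using aa by auto
qed

definition delf :: "nat \<Rightarrow> (nat \<Rightarrow> nat) \<Rightarrow> nat \<Rightarrow> nat" where
  "delf M p i = (if i \<in> {1..M} then (if p (Suc M) < p i then p i - 1 else p i) else i)"

lemma delf_permutes:
  assumes p: "p permutes {1..Suc M}" and pn: "p (Suc M) \<noteq> Suc M"
  shows "delf M p permutes {1..M}" and "insf M (p (Suc M)) (delf M p) = p"
    and "p (Suc M) \<in> {1..M}"
proof -
  let ?a = "p (Suc M)" let ?q = "delf M p"
  have pi: "\<And>i. i \<in> {1..Suc M} \<Longrightarrow> p i \<in> {1..Suc M}" using permutes_in_image[OF p] by blast
  have ip: "\<And>u v. p u = p v \<Longrightarrow> u = v" using permutes_inj[OF p] by (simp add: inj_eq)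
  have a: "?a \<in> {1..M}" using pi[of "Suc M"] pn by auto
  then show "?a \<in> {1..M}" .
  have ne: "\<And>i. i \<in> {1..M} \<Longrightarrow> p i \<noteq> ?a" using ip by force
  have out: "\<And>x. x \<notin> {1..M} \<Longrightarrow> ?q x = x" by (auto simp: delf_def)
  have img: "?q ` {1..M} \<subseteq> {1..M}"
  proof
    fix y assume "y \<in> ?q ` {1..M}"
    then obtain x where x: "x \<in> {1..M}" "y = ?q x" by blast
    have "p x \<in> {1..Suc M}" using pi x by auto
    then show "y \<in> {1..M}" using x a ne[of x] by (auto simp: delf_def)
  qed
  have inj: "inj_on ?q {1..M}"
  proof (rule inj_onI)
    fix x y assume x: "x \<in> {1..M}" and y: "y \<in> {1..M}" and e: "?q x = ?q y"
    have "p x \<noteq> ?a" "p y \<noteq> ?a" using ne x y by auto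
    then have "p x = p y" using e x y by (auto simp: delf_def split: if_splits)
    then show "x = y" using ip by blast
  qed
  have "bij_betw ?q {1..M} {1..M}"
    using endo_inj_surj[OF _ img inj] inj by (simp add: bij_betw_def)
  then show qp: "?q permutes {1..M}" using out bij_imp_permutes by blast
  show "insf M ?a ?q = p"
  proof
    fix i
    show "insf M ?a ?q i = p i"
    proof (cases "i = Suc M")
      case True then show ?thesis by (simp add: insf_def)
    next
      case False
      show ?thesis
      proof (cases "i \<in> {1..M}")
        case True
        then show ?thesis using ne[of i] False by (auto simp: insf_def delf_def)
      next
        case F2: False
        then have "i \<notin> {1..Suc M}" using False by auto
        have "insf M ?a ?q i = i" unfolding insf_def using F2 False by presburger
        then show ?thesis using permutes_not_in[OF p] \<open>i \<notin> {1..Suc M}\<close> by simp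
      qed
    qed
  qed
qed


lemma fix_char:
  assumes p: "p permutes {1..Suc M}" and pn: "p (Suc M) = Suc M" and M: "1 \<le> M" and r: "r \<le> M"
  shows "winnable (Suc M) r p \<longleftrightarrow> (\<exists>m. 1 \<le> m \<and> m \<le> r \<and> p m = M)"
proof -
  have pi: "\<And>i. i \<in> {1..Suc M} \<Longrightarrow> p i \<in> {1..Suc M}" using permutes_in_image[OF p] by blast
  have ip: "\<And>u v. p u = p v \<Longrightarrow> u = v" using permutes_inj[OF p] by (simp add: inj_eq)
  have lt: "p i < Suc M" if "1 \<le> i" "i < Suc M" for i
  proof -
    have "p i \<in> {1..Suc M}" using pi that by auto
    moreover have "p i \<noteq> Suc M" using ip[of i "Suc M"] pn that by auto
    ultimately show ?thesis by auto
  qed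
  show ?thesis
  proof
    assume "winnable (Suc M) r p"
    then obtain j where j: "r < j" "j \<le> Suc M" "ltr_max p j"
      "\<forall>k. r < k \<and> k < j \<longrightarrow> \<not> ltr_max p k" "p j = Suc M"
      unfolding winnable_def by blast
    have jn: "j = Suc M" using ip[of j "Suc M"] j pn by auto
    define m where "m = inv p M"
    have pm: "p m = M" using permutes_inverses[OF p] m_def by simp
    have m1: "m \<in> {1..Suc M}" using permutes_in_image[OF p, of m] pm M by auto
    have mn: "m \<noteq> Suc M" using pm pn by auto
    have "m \<le> r"
    proof (rule ccontr)
      assume "\<not> m \<le> r"
      then have "\<not> ltr_max p m" using j jn m1 mn by auto
      moreover have "ltr_max p m" unfolding ltr_max_def
      proof (intro allI impI)
        fix i assume i: "1 \<le> i \<and> i < m"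
        have "p i < Suc M" using lt[of i] i m1 by auto
        moreover have "p i \<noteq> M" using ip[of i m] pm i by auto
        ultimately show "p i < p m" using pm by auto
      qed
      ultimately show False by blast
    qed
    then show "\<exists>m. 1 \<le> m \<and> m \<le> r \<and> p m = M" using m1 pm by auto
  next
    assume "\<exists>m. 1 \<le> m \<and> m \<le> r \<and> p m = M"
    then obtain m where m: "1 \<le> m" "m \<le> r" "p m = M" by blast
    show "winnable (Suc M) r p" unfolding winnable_def
    proof (intro exI conjI allI impI)
      show "r < Suc M" "Suc M \<le> Suc M" "p (Suc M) = Suc M" using r pn by auto
      show "ltr_max p (Suc M)" unfolding ltr_max_def using lt pn by auto
      fix k assume k: "r < k \<and> k < Suc M"
      show "\<not> ltr_max p k"
      proof
        assume "ltr_max p k"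
        then have "p m < p k" using m k unfolding ltr_max_def by auto
        moreover have "p k < Suc M" using lt[of k] k m by auto
        ultimately show False using m by auto
      qed
    qed
  qed
qed

lemma card_D_top:
  fixes M :: nat
  assumes M: "1 \<le> M"
  shows "card {p. p permutes {1..M} \<and> p M = M} = fact (M - 1)"
proof -
  have "{p. p permutes {1..M} \<and> p M = M} = {p. p permutes {1..M-1}}"
  proof (intro set_eqI iffI)
    fix p assume "p \<in> {p. p permutes {1..M} \<and> p M = M}"
    then have "p permutes {1..M}" "p M = M" by auto
    have "p permutes {1..M-1}"
    proof (rule permutes_superset[OF \<open>p permutes {1..M}\<close>])
      fix x assume "x \<in> {1..M} - {1..M-1}"
      then have "x = M" by auto
      then show "p x = x" using \<open>p M = M\<close> by simp
    qed
    then show "p \<in> {p. p permutes {1..M-1}}" by simp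
  next
    fix p assume "p \<in> {p. p permutes {1..M-1}}"
    then have pp: "p permutes {1..M-1}" by simp
    have "p permutes {1..M}" by (rule permutes_subset[OF pp]) auto
    moreover have "p M = M" using permutes_not_in[OF pp, of M] M by auto
    ultimately show "p \<in> {p. p permutes {1..M} \<and> p M = M}" by simp
  qed
  then show ?thesis using card_permutations[of "{1..M-1}" "M-1"] by simp
qed

lemma card_D_le:
  fixes M :: nat
  assumes m: "m \<in> {1..M}" and m': "m' \<in> {1..M}"
  shows "card {p. p permutes {1..M} \<and> p m = M} \<le> card {p. p permutes {1..M} \<and> p m' = M}"
proof (rule card_inj_on_le)
  let ?t = "Transposition.transpose m m'"
  show "inj_on (\<lambda>p. p \<circ> ?t) {p. p permutes {1..M} \<and> p m = M}"
  proof (rule inj_onI)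
    fix p p' assume "p \<circ> ?t = p' \<circ> ?t"
    then have "p \<circ> ?t \<circ> ?t = p' \<circ> ?t \<circ> ?t" by simp
    then show "p = p'" by (simp add: comp_assoc)
  qed
  show "(\<lambda>p. p \<circ> ?t) ` {p. p permutes {1..M} \<and> p m = M} \<subseteq> {p. p permutes {1..M} \<and> p m' = M}"
    using permutes_compose[OF permutes_swap_id[OF m m']] by auto
  show "finite {p. p permutes {1..M} \<and> p m' = M}"
  proof -
    have "finite {p::nat\<Rightarrow>nat. p permutes {1..M}}" by (rule finite_permutations) simp
    then show ?thesis by (rule rev_finite_subset) auto
  qed
qed

lemma card_D:
  fixes M :: nat
  assumes m: "m \<in> {1..M}"
  shows "card {p. p permutes {1..M} \<and> p m = M} = fact (M - 1)"
proof -
  have M: "M \<in> {1..M}" "1 \<le> M" using m by auto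
  show ?thesis using card_D_le[OF m M(1)] card_D_le[OF M(1) m] card_D_top[OF M(2)] by simp
qed


lemma rec_step:
  fixes \<theta> :: real
  assumes M: "1 \<le> M" and r: "r \<le> M"
  shows "W \<theta> (Suc M) r = real M * W \<theta> M r + real r * fact (M - 1) * \<theta> ^ M"
proof -
  define S where "S = {p. p permutes {1..Suc M} \<and> winnable (Suc M) r p}"
  define A where "A = {p \<in> S. p (Suc M) \<noteq> Suc M}"
  define C where "C = {p \<in> S. p (Suc M) = Suc M}"
  define B where "B = {q. q permutes {1..M} \<and> winnable M r q}"
  define g where "g = (\<lambda>p. \<theta> ^ (inv p (Suc M) - 1))"
  have finS: "finite S"
  proof -
    have "finite {p::nat\<Rightarrow>nat. p permutes {1..Suc M}}" by (rule finite_permutations) simp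
    then show ?thesis unfolding S_def by (rule rev_finite_subset) auto
  qed
  have finB: "finite B"
  proof -
    have "finite {p::nat\<Rightarrow>nat. p permutes {1..M}}" by (rule finite_permutations) simp
    then show ?thesis unfolding B_def by (rule rev_finite_subset) auto
  qed
  have SAC: "S = A \<union> C" "A \<inter> C = {}" unfolding A_def C_def by auto
  have WS: "W \<theta> (Suc M) r = sum g S" unfolding W_def S_def g_def by simp
  have sumS: "sum g S = sum g A + sum g C"
    using SAC finS by (simp add: sum.union_disjoint)
  have Aim: "A = (\<lambda>(a,q). insf M a q) ` ({1..M} \<times> B)"
  proof (intro set_eqI iffI)
    fix p assume "p \<in> A"
    then have p: "p permutes {1..Suc M}" "winnable (Suc M) r p" "p (Suc M) \<noteq> Suc M"
      unfolding A_def S_def by auto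
    note d = delf_permutes[OF p(1) p(3)]
    have "winnable M r (delf M p)"
      using insf_winnable[OF d(1) d(3)] d(2) p(2) by simp
    then have "(p (Suc M), delf M p) \<in> {1..M} \<times> B" using d unfolding B_def by auto
    then show "p \<in> (\<lambda>(a,q). insf M a q) ` ({1..M} \<times> B)" using d(2) by force
  next
    fix p assume "p \<in> (\<lambda>(a,q). insf M a q) ` ({1..M} \<times> B)"
    then obtain a q where aq: "a \<in> {1..M}" "q \<in> B" "p = insf M a q" by auto
    then have q: "q permutes {1..M}" "winnable M r q" unfolding B_def by auto
    have "p permutes {1..Suc M}" using insf_permutes[OF q(1) aq(1)] aq by simp
    moreover have "winnable (Suc M) r p" using insf_winnable[OF q(1) aq(1)] q aq by simp
    moreover have "p (Suc M) \<noteq> Suc M" using aq by (simp add: insf_def)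
    ultimately show "p \<in> A" unfolding A_def S_def by simp
  qed
  have injA: "inj_on (\<lambda>(a,q). insf M a q) ({1..M} \<times> B)"
  proof (rule inj_onI)
    fix x y assume x: "x \<in> {1..M} \<times> B" and y: "y \<in> {1..M} \<times> B"
      and e: "(case x of (a,q) \<Rightarrow> insf M a q) = (case y of (a,q) \<Rightarrow> insf M a q)"
    obtain a q where xa: "x = (a,q)" "q permutes {1..M}" using x unfolding B_def by auto
    obtain a' q' where ya: "y = (a',q')" "q' permutes {1..M}" using y unfolding B_def by auto
    have "insf M a q = insf M a' q'" using e xa ya by simp
    then show "x = y" using insf_inj[OF xa(2) ya(2)] xa ya by simp
  qed
  have "sum g A = (\<Sum>x\<in>{1..M} \<times> B. g (case x of (a,q) \<Rightarrow> insf M a q))"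
    unfolding Aim by (rule sum.reindex[OF injA, unfolded comp_def])
  also have "\<dots> = (\<Sum>x\<in>{1..M} \<times> B. \<theta> ^ (inv (snd x) M - 1))"
  proof (rule sum.cong[OF refl])
    fix x assume "x \<in> {1..M} \<times> B"
    then obtain a q where "x = (a,q)" "a \<in> {1..M}" "q permutes {1..M}" unfolding B_def by auto
    then show "g (case x of (a,q) \<Rightarrow> insf M a q) = \<theta> ^ (inv (snd x) M - 1)"
      using insf_inv[of q M a] M unfolding g_def by simp
  qed
  also have "\<dots> = (\<Sum>a\<in>{1..M}. \<Sum>q\<in>B. \<theta> ^ (inv q M - 1))"
    by (subst sum.cartesian_product) (simp add: case_prod_beta)
  also have "\<dots> = real M * W \<theta> M r" unfolding W_def B_def by simp
  finally have sumA: "sum g A = real M * W \<theta> M r" .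
  define D where "D = (\<lambda>m. {p. p permutes {1..M} \<and> p m = M})"
  have Ceq: "C = (\<Union>m\<in>{1..r}. D m)"
  proof (intro set_eqI iffI)
    fix p assume "p \<in> C"
    then have p: "p permutes {1..Suc M}" "winnable (Suc M) r p" "p (Suc M) = Suc M"
      unfolding C_def S_def by auto
    have pp: "p permutes {1..M}"
    proof (rule permutes_superset[OF p(1)])
      fix x assume "x \<in> {1..Suc M} - {1..M}"
      then have "x = Suc M" by auto
      then show "p x = x" using p(3) by simp
    qed
    then show "p \<in> (\<Union>m\<in>{1..r}. D m)" using fix_char[OF p(1) p(3) M r] p(2) unfolding D_def by auto
  next
    fix p assume "p \<in> (\<Union>m\<in>{1..r}. D m)"
    then obtain m where m: "m \<in> {1..r}" "p permutes {1..M}" "p m = M" unfolding D_def by auto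
    have p1: "p permutes {1..Suc M}" by (rule permutes_subset[OF m(2)]) auto
    have p3: "p (Suc M) = Suc M" using permutes_not_in[OF m(2)] by simp
    have "winnable (Suc M) r p" using fix_char[OF p1 p3 M r] m by auto
    then show "p \<in> C" unfolding C_def S_def using p1 p3 by simp
  qed
  have cardC: "card C = r * fact (M - 1)"
  proof -
    have "card C = (\<Sum>m\<in>{1..r}. card (D m))"
      unfolding Ceq
    proof (rule card_UN_disjoint)
      show "finite {1..r}" by simp
      show "\<forall>i\<in>{1..r}. finite (D i)"
      proof
        fix i
        have "finite {p::nat\<Rightarrow>nat. p permutes {1..M}}" by (rule finite_permutations) simp
        then show "finite (D i)" unfolding D_def by (rule rev_finite_subset) auto
      qed
      show "\<forall>i\<in>{1..r}. \<forall>j\<in>{1..r}. i \<noteq> j \<longrightarrow> D i \<inter> D j = {}"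
      proof (intro ballI impI)
        fix i j :: nat assume "i \<noteq> j"
        show "D i \<inter> D j = {}"
        proof (rule ccontr)
          assume "D i \<inter> D j \<noteq> {}"
          then obtain p where "p permutes {1..M}" "p i = M" "p j = M" unfolding D_def by auto
          then show False using permutes_inj[of p "{1..M}"] \<open>i \<noteq> j\<close> by (metis injD)
        qed
      qed
    qed
    also have "\<dots> = (\<Sum>m\<in>{1..r}. fact (M - 1))"
    proof (rule sum.cong[OF refl])
      fix m assume "m \<in> {1..r}"
      then have "m \<in> {1..M}" using r by auto
      then show "card (D m) = fact (M - 1)" unfolding D_def by (rule card_D)
    qed
    finally show ?thesis by simp
  qed
  have "sum g C = (\<Sum>p\<in>C. \<theta> ^ M)"
  proof (rule sum.cong[OF refl])
    fix p assume "p \<in> C"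
    then have "p permutes {1..Suc M}" "p (Suc M) = Suc M" unfolding C_def S_def by auto
    then have "inv p (Suc M) = Suc M" using permutes_inv_eq by metis
    then show "g p = \<theta> ^ M" unfolding g_def by simp
  qed
  also have "\<dots> = real r * fact (M - 1) * \<theta> ^ M" using cardC by (simp add: of_nat_fact)
  finally have sumC: "sum g C = real r * fact (M - 1) * \<theta> ^ M" .
  show ?thesis using WS sumS sumA sumC by simp
qed

theorem theorem2p1:
  fixes \<theta> :: real
  assumes "\<theta> > 0"
  shows "(\<forall>N r. 2 \<le> N \<and> r < N \<longrightarrow>
            W \<theta> N r = real (N - 1) * W \<theta> (N - 1) r + real r * fact (N - 2) * \<theta> ^ (N - 1))
         \<and> W \<theta> 1 0 = 1 \<and> (\<forall>r \<ge> 1. W \<theta> 1 r = 0)"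
proof (intro conjI allI impI)
  fix N r :: nat assume h: "2 \<le> N \<and> r < N"
  define M where "M = N - 1"
  have N: "N = Suc M" "1 \<le> M" "r \<le> M" using h unfolding M_def by auto
  show "W \<theta> N r = real (N - 1) * W \<theta> (N - 1) r + real r * fact (N - 2) * \<theta> ^ (N - 1)"
    using rec_step[OF N(2) N(3)] N(1) by simp
next
  have w: "winnable 1 0 id" unfolding winnable_def ltr_max_def
    by (rule exI[of _ 1]) auto
  have "{p. p permutes {1..1::nat} \<and> winnable 1 0 p} = {id}"
    using w by auto
  then show "W \<theta> 1 0 = 1" unfolding W_def by simp
next
  fix r :: nat assume "1 \<le> r"
  then have "\<not> winnable 1 r p" for p unfolding winnable_def by auto
  then have "{p. p permutes {1..1::nat} \<and> winnable 1 r p} = {}"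
    by blast
  then show "W \<theta> 1 r = 0" unfolding W_def by simp
qed

end
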